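(* There is no class $\mathcal C$ of pWF nets satisfying all three of the following: (1) every sub-sound pWF net belongs to $\mathcal C$, and $\mathcal C$ contains at least one pWF net that is not sub-sound; (2) every net in $\mathcal C$ is $1$-sound; (3) $\mathcal C$ is preserved by substitution, i.e. whenever $N,M\in\mathcal C$ have disjoint node sets and $p$ is a place of $N$, then $N\otimes_p M\in\mathcal C$.
   Context: Petri nets and markings. A Petri net is a triple $(P,T,F)$ with $P$ a finite set of places, $T$ a finite set of transitions, $P\cap T=\emptyset$, and $F\subseteq (P\times T)\cup(T\times P)$. For a node $x$, $\bullet x=\{y\mid (y,x)\in F\}$, $x\bullet=\{y\mid (x,y)\in F\}$. A marking is a multiset over $P$ (a function $P\to\mathbb N$); sets of places are identified with bags of multiplicity one, $+,-,\le$ are pointwise, and $k.m$ is the sum of $k$ copies of $m$. Transition $t$ is enabled at $m$ iff $\bullet t\le m$, firing gives $m-\bullet t+t\bullet$, and $m\xrightarrow{*}m'$ denotes reachability by a finite (possibly empty) firing sequence. A pWF net is $(P,T,F,I,O)$ with $(P,T,F)$ a Petri net, $I,O\subseteq P$ non-empty (input/output places), every node reachable by a directed path from some node of $I$, and some node of $O$ reachable from every node; input places may have incoming edges and output places outgoing edges. Soundness. A pWF net is $k$-sound if for every marking $m$ with $k.I\xrightarrow{*}m$ we have $m\xrightarrow{*}k.O$. It is substitution-sound (sub-sound) if for all integers $k\ge k'\ge 0$ and every marking $m'$: if $k.I\xrightarrow{*}m'+k'.O$ then $m'\xrightarrow{*}(k-k').O$. Place substitution. For pWF nets $N=(P,T,F,I,O)$,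 $M=(P',T',F',I',O')$ with disjoint node sets and $p\in P$, $N\otimes_p M$ is obtained from $N$ by deleting $p$ and all edges incident to $p$, adding all nodes and edges of $M$, adding an edge $(t,p')$ for each $t\in\bullet_N p$ and $p'\in I'$, and an edge $(p',t)$ for each $p'\in O'$ and $t\in p\bullet_N$; its input set is $(I\setminus\{p\})\cup I'$ if $p\in I$ and $I$ otherwise, and its output set is $(O\setminus\{p\})\cup O'$ if $p\in O$ and $O$ otherwise. *)

theory Defs
  imports Main "HOL-Library.Multiset"
begin

record 'a pnet =
  places :: "'a set"
  trans  :: "'a set"
  flow   :: "('a \<times> 'a) set"
  inp    :: "'a set"
  outp   :: "'a set"

definition petri_net :: "'a pnet \<Rightarrow> bool" where
  "petri_net N \<longleftrightarrow> finite (places N) \<and> finite (trans N) \<and>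
     places N \<inter> trans N = {} \<and>
     flow N \<subseteq> (places N \<times> trans N) \<union> (trans N \<times> places N)"

definition nodes :: "'a pnet \<Rightarrow> 'a set" where
  "nodes N = places N \<union> trans N"

definition pWF :: "'a pnet \<Rightarrow> bool" where
  "pWF N \<longleftrightarrow> petri_net N \<and>
     inp N \<subseteq> places N \<and> outp N \<subseteq> places N \<and> inp N \<noteq> {} \<and> outp N \<noteq> {} \<and>
     (\<forall>x \<in> nodes N. \<exists>i \<in> inp N. (i, x) \<in> (flow N)\<^sup>*) \<and>
     (\<forall>x \<in> nodes N. \<exists>q \<in> outp N. (x, q) \<in> (flow N)\<^sup>*)"

definition preset :: "'a pnet \<Rightarrow> 'a \<Rightarrow> 'a set" where
  "preset N x = {y. (y, x) \<in> flow N}"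

definition postset :: "'a pnet \<Rightarrow> 'a \<Rightarrow> 'a set" where
  "postset N x = {y. (x, y) \<in> flow N}"

text \<open>Markings are multisets of nodes; sets are bags of multiplicity one.\<close>
definition fire_step :: "'a pnet \<Rightarrow> 'a multiset \<Rightarrow> 'a multiset \<Rightarrow> bool" where
  "fire_step N m m' \<longleftrightarrow> (\<exists>t \<in> trans N. mset_set (preset N t) \<subseteq># m \<and>
      m' = m - mset_set (preset N t) + mset_set (postset N t))"

definition reach :: "'a pnet \<Rightarrow> 'a multiset \<Rightarrow> 'a multiset \<Rightarrow> bool" where
  "reach N = (fire_step N)\<^sup>*\<^sup>*"

definition k_sound :: "nat \<Rightarrow> 'a pnet \<Rightarrow> bool" where
  "k_sound k N \<longleftrightarrow> (\<forall>m. reach N (repeat_mset k (mset_set (inp N))) m \<longrightarrow>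
       reach N m (repeat_mset k (mset_set (outp N))))"

definition sub_sound :: "'a pnet \<Rightarrow> bool" where
  "sub_sound N \<longleftrightarrow> (\<forall>k k' m'. k' \<le> k \<longrightarrow>
      reach N (repeat_mset k (mset_set (inp N))) (m' + repeat_mset k' (mset_set (outp N))) \<longrightarrow>
      reach N m' (repeat_mset (k - k') (mset_set (outp N))))"

definition subst_place :: "'a pnet \<Rightarrow> 'a \<Rightarrow> 'a pnet \<Rightarrow> 'a pnet" where
  "subst_place N p M =
    \<lparr> places = (places N - {p}) \<union> places M,
      trans = trans N \<union> trans M,
      flow = {e \<in> flow N. fst e \<noteq> p \<and> snd e \<noteq> p} \<union> flow M
             \<union> {(t, q). t \<in> preset N p \<and> q \<in> inp M}
             \<union> {(q, t). q \<in> outp M \<and> t \<in> postset N p},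
      inp = (if p \<in> inp N then (inp N - {p}) \<union> inp M else inp N),
      outp = (if p \<in> outp N then (outp N - {p}) \<union> outp M else outp N) \<rparr>"

end

theory Submission imports Defs begin

lemma reach_refl[simp]: "reach N m m" by (simp add: reach_def)
lemma reach_trans: "reach N a b \<Longrightarrow> reach N b c \<Longrightarrow> reach N a c"
  unfolding reach_def by (rule rtranclp_trans)
lemma reach_step: "fire_step N a b \<Longrightarrow> reach N a b"
  unfolding reach_def by auto
lemma reach_step_trans: "reach N a b \<Longrightarrow> fire_step N b c \<Longrightarrow> reach N a c"
  unfolding reach_def by auto

lemma fire_step_mono: "fire_step N a b \<Longrightarrow> fire_step N (a+c) (b+c)"
proof -
  assume "fire_step N a b"
  then obtain t where t: "t \<in> trans N" "mset_set (preset N t) \<subseteq># a"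
    "b = a - mset_set (preset N t) + mset_set (postset N t)" unfolding fire_step_def by blast
  have "mset_set (preset N t) \<subseteq># a + c" by (rule subset_mset.order_trans[OF t(2)]) simp
  moreover have "b + c = a + c - mset_set (preset N t) + mset_set (postset N t)"
  proof (rule multiset_eqI)
    fix x have "count (mset_set (preset N t)) x \<le> count a x" using t(2) by (simp add: subseteq_mset_def)
    then show "count (b + c) x = count (a + c - mset_set (preset N t) + mset_set (postset N t)) x"
      using t(3) by simp
  qed
  ultimately show ?thesis using t(1) unfolding fire_step_def by blast
qed

lemma reach_mono: "reach N a b \<Longrightarrow> reach N (a+c) (b+c)"
  unfolding reach_def
proof (induction rule: rtranclp_induct)
  case base then show ?case by simp
next
  case (step y z) then show ?case using fire_step_mono[of N y z c]
    by (metis rtranclp.rtrancl_into_rtrancl)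
qed

lemma reach_sub:
  assumes "\<And>t. t \<in> trans N \<Longrightarrow> t \<in> trans N' \<and> preset N' t = preset N t \<and> postset N' t = postset N t"
  shows "reach N a b \<Longrightarrow> reach N' a b"
  unfolding reach_def
proof (induction rule: rtranclp_induct)
  case base then show ?case by simp
next
  case (step y z)
  have "fire_step N' y z" using step(2) assms unfolding fire_step_def by metis
  then show ?case using step(3) by (metis rtranclp.rtrancl_into_rtrancl)
qed

lemma postset_places: "petri_net N \<Longrightarrow> t \<in> trans N \<Longrightarrow> postset N t \<subseteq> places N"
  unfolding petri_net_def postset_def by auto

lemma preset_places: "petri_net N \<Longrightarrow> t \<in> trans N \<Longrightarrow> preset N t \<subseteq> places N"
  unfolding petri_net_def preset_def by auto

lemma fin_preset: "petri_net N \<Longrightarrow> t \<in> trans N \<Longrightarrow> finite (preset N t)"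
  using preset_places petri_net_def finite_subset by metis
lemma fin_postset: "petri_net N \<Longrightarrow> t \<in> trans N \<Longrightarrow> finite (postset N t)"
  using postset_places petri_net_def finite_subset by metis

lemma fire_places: "petri_net N \<Longrightarrow> set_mset a \<subseteq> places N \<Longrightarrow> fire_step N a b \<Longrightarrow> set_mset b \<subseteq> places N"
  unfolding fire_step_def
proof (elim bexE conjE)
  fix t assume pn: "petri_net N" and a: "set_mset a \<subseteq> places N" and t: "t \<in> trans N"
    and b: "b = a - mset_set (preset N t) + mset_set (postset N t)"
  have "set_mset b \<subseteq> set_mset a \<union> set_mset (mset_set (postset N t))"
    using b by (auto dest: in_diffD)
  also have "\<dots> \<subseteq> places N" using a postset_places[OF pn t] fin_postset[OF pn t] by auto
  finally show ?thesis .
qed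

lemma reach_places: assumes "petri_net N" "reach N a b" "set_mset a \<subseteq> places N" shows "set_mset b \<subseteq> places N"
  using assms(2) unfolding reach_def
  proof (induction rule: rtranclp_induct)
  case base then show ?case using assms(3) by simp
next
  case (step y z) then show ?case using fire_places[OF assms(1), of y z] by simp
qed

lemma flow_nodes: "petri_net N \<Longrightarrow> (x,y) \<in> flow N \<Longrightarrow> x \<in> nodes N \<and> y \<in> nodes N"
  unfolding petri_net_def nodes_def by auto

lemma subst_pre_inner:
  assumes "petri_net X" "pWF Y" "nodes X \<inter> nodes Y = {}" "t \<in> trans Y"
  shows "preset (subst_place X p Y) t = preset Y t"
proof -
  have t: "t \<notin> nodes X" "t \<notin> places Y" using assms unfolding nodes_def pWF_def petri_net_def by auto
  have "t \<notin> inp Y" using t assms(2) unfolding pWF_def by auto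
  moreover have "t \<notin> postset X p" using t flow_nodes[OF assms(1)] unfolding postset_def by auto
  moreover have "(y,t) \<notin> flow X" for y using t flow_nodes[OF assms(1)] by auto
  ultimately show ?thesis unfolding preset_def subst_place_def by auto
qed

lemma subst_post_inner:
  assumes "petri_net X" "pWF Y" "nodes X \<inter> nodes Y = {}" "t \<in> trans Y"
  shows "postset (subst_place X p Y) t = postset Y t"
proof -
  have t: "t \<notin> nodes X" "t \<notin> places Y" using assms unfolding nodes_def pWF_def petri_net_def by auto
  have "t \<notin> outp Y" using t assms(2) unfolding pWF_def by auto
  moreover have "t \<notin> preset X p" using t flow_nodes[OF assms(1)] unfolding preset_def by auto
  moreover have "(t,y) \<notin> flow X" for y using t flow_nodes[OF assms(1)] by auto
  ultimately show ?thesis unfolding postset_def subst_place_def by auto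
qed

lemma subst_pre_outer:
  assumes "petri_net X" "pWF Y" "nodes X \<inter> nodes Y = {}" "t \<in> trans X" "p \<in> places X"
  shows "preset (subst_place X p Y) t = (preset X t - {p}) \<union> (if p \<in> preset X t then outp Y else {})"
proof -
  have pY: "petri_net Y" using assms(2) unfolding pWF_def by auto
  have t: "t \<notin> nodes Y" "t \<noteq> p" "t \<notin> places Y" using assms unfolding nodes_def petri_net_def by auto
  have "t \<notin> inp Y" using t assms(2) unfolding pWF_def by auto
  moreover have "(y,t) \<notin> flow Y" for y using t flow_nodes[OF pY] by auto
  ultimately show ?thesis using t unfolding preset_def postset_def subst_place_def by auto
qed

lemma subst_post_outer:
  assumes "petri_net X" "pWF Y" "nodes X \<inter> nodes Y = {}" "t \<in> trans X" "p \<in> places X"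
  shows "postset (subst_place X p Y) t = (postset X t - {p}) \<union> (if p \<in> postset X t then inp Y else {})"
proof -
  have pY: "petri_net Y" using assms(2) unfolding pWF_def by auto
  have t: "t \<notin> nodes Y" "t \<noteq> p" "t \<notin> places Y" using assms unfolding nodes_def petri_net_def by auto
  have "t \<notin> outp Y" using t assms(2) unfolding pWF_def by auto
  moreover have "(t,y) \<notin> flow Y" for y using t flow_nodes[OF pY] by auto
  ultimately show ?thesis using t unfolding preset_def postset_def subst_place_def by auto
qed

definition Qn :: "(nat \<Rightarrow> 'a) \<Rightarrow> nat \<Rightarrow> 'a" where "Qn f j = f (3*j)"
definition Tn :: "(nat \<Rightarrow> 'a) \<Rightarrow> nat \<Rightarrow> 'a" where "Tn f j = f (3*j+1)"
definition Pn :: "(nat \<Rightarrow> 'a) \<Rightarrow> 'a" where "Pn f = f 2"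

lemma QTP_simps:
  assumes "inj f"
  shows "Qn f i = Qn f j \<longleftrightarrow> i = j" "Tn f i = Tn f j \<longleftrightarrow> i = j" "Qn f i \<noteq> Tn f j" "Tn f j \<noteq> Qn f i"
    "Qn f i \<noteq> Pn f" "Pn f \<noteq> Qn f i" "Tn f i \<noteq> Pn f" "Pn f \<noteq> Tn f i"
  using assms unfolding Qn_def Tn_def Pn_def inj_eq[OF assms] by presburger+

definition Snet :: "(nat \<Rightarrow> 'a) \<Rightarrow> nat \<Rightarrow> 'a pnet" where
  "Snet f k = \<lparr> places = Qn f ` {..2*k} \<union> {Pn f}, trans = Tn f ` {..<2*k},
     flow = (\<lambda>j. (Qn f j, Tn f j)) ` {..<2*k} \<union> (\<lambda>j. (Tn f j, Qn f (Suc j))) ` {..<2*k}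
          \<union> (\<lambda>j. (Tn f j, Pn f)) ` {..<k} \<union> (\<lambda>j. (Pn f, Tn f j)) ` {k..<2*k},
     inp = {Qn f 0}, outp = {Qn f (2*k)} \<rparr>"

lemma S_pre: assumes "inj f" "j < 2*k"
  shows "preset (Snet f k) (Tn f j) = insert (Qn f j) (if k \<le> j then {Pn f} else {})"
  using assms unfolding preset_def Snet_def by (auto simp: QTP_simps[OF assms(1)])

lemma S_post: assumes "inj f" "j < 2*k"
  shows "postset (Snet f k) (Tn f j) = insert (Qn f (Suc j)) (if j < k then {Pn f} else {})"
  using assms unfolding postset_def Snet_def by (auto simp: QTP_simps[OF assms(1)])

lemma S_preP: assumes "inj f"
  shows "preset (Snet f k) (Pn f) = Tn f ` {..<k}"
  using assms unfolding preset_def Snet_def by (auto simp: QTP_simps[OF assms(1)])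

lemma S_postP: assumes "inj f"
  shows "postset (Snet f k) (Pn f) = Tn f ` {k..<2*k}"
  using assms unfolding postset_def Snet_def by (auto simp: QTP_simps[OF assms(1)])

lemma S_edges:
  "j < 2*k \<Longrightarrow> (Qn f j, Tn f j) \<in> flow (Snet f k)"
  "j < 2*k \<Longrightarrow> (Tn f j, Qn f (Suc j)) \<in> flow (Snet f k)"
  "j < k \<Longrightarrow> (Tn f j, Pn f) \<in> flow (Snet f k)"
  "k \<le> j \<Longrightarrow> j < 2*k \<Longrightarrow> (Pn f, Tn f j) \<in> flow (Snet f k)"
  unfolding Snet_def by auto

lemma S_chain: "i + d \<le> 2*k \<Longrightarrow> (Qn f i, Qn f (i+d)) \<in> (flow (Snet f k))\<^sup>*"
proof (induction d)
  case 0 then show ?case by simp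
next
  case (Suc d)
  then have "(Qn f i, Qn f (i+d)) \<in> (flow (Snet f k))\<^sup>*" by simp
  moreover have "(Qn f (i+d), Tn f (i+d)) \<in> flow (Snet f k)" using Suc.prems S_edges(1)[of "i+d" k f] by simp
  moreover have "(Tn f (i+d), Qn f (i + Suc d)) \<in> flow (Snet f k)" using Suc.prems S_edges(2)[of "i+d" k f] by simp
  ultimately show ?case by (meson rtrancl_into_rtrancl)
qed

lemma S_pWF: assumes "inj f" "1 \<le> k" shows "pWF (Snet f k)"
proof -
  note qs = QTP_simps[OF assms(1)]
  have pn: "petri_net (Snet f k)"
    unfolding petri_net_def Snet_def by (auto simp: qs)
  have fw: "(Qn f 0, x) \<in> (flow (Snet f k))\<^sup>*" if "x \<in> nodes (Snet f k)" for x
  proof -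
    have "x \<in> Qn f ` {..2*k} \<or> x = Pn f \<or> x \<in> Tn f ` {..<2*k}" using that unfolding nodes_def Snet_def by auto
    then show ?thesis
    proof (elim disjE imageE)
      fix j assume "j \<in> {..2*k}" "x = Qn f j" then show ?thesis using S_chain[of 0 j k f] by simp
    next
      assume x: "x = Pn f"
      have "(Qn f 0, Tn f 0) \<in> flow (Snet f k)" using S_edges(1)[of 0 k f] assms by simp
      moreover have "(Tn f 0, Pn f) \<in> flow (Snet f k)" using S_edges(3)[of 0 k f] assms by simp
      ultimately show ?thesis using x by (meson rtrancl.rtrancl_into_rtrancl r_into_rtrancl)
    next
      fix j assume j: "j \<in> {..<2*k}" "x = Tn f j"
      have "(Qn f 0, Qn f j) \<in> (flow (Snet f k))\<^sup>*" using S_chain[of 0 j k f] j by simp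
      moreover have "(Qn f j, Tn f j) \<in> flow (Snet f k)" using S_edges(1) j by simp
      ultimately show ?thesis using j by (meson rtrancl.rtrancl_into_rtrancl)
    qed
  qed
  have bw: "(x, Qn f (2*k)) \<in> (flow (Snet f k))\<^sup>*" if "x \<in> nodes (Snet f k)" for x
  proof -
    have "x \<in> Qn f ` {..2*k} \<or> x = Pn f \<or> x \<in> Tn f ` {..<2*k}" using that unfolding nodes_def Snet_def by auto
    then show ?thesis
    proof (elim disjE imageE)
      fix j assume "j \<in> {..2*k}" "x = Qn f j" then show ?thesis using S_chain[of j "2*k-j" k f] by simp
    next
      assume x: "x = Pn f"
      have "(Pn f, Tn f k) \<in> flow (Snet f k)" using S_edges(4)[of k k f] assms by simp
      moreover have "(Tn f k, Qn f (Suc k)) \<in> flow (Snet f k)" using S_edges(2)[of k k f] assms by simp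
      moreover have "(Qn f (Suc k), Qn f (2*k)) \<in> (flow (Snet f k))\<^sup>*" using S_chain[of "Suc k" "2*k - Suc k" k f] assms by (simp add: mult_2)
      ultimately show ?thesis using x by (meson converse_rtrancl_into_rtrancl)
    next
      fix j assume j: "j \<in> {..<2*k}" "x = Tn f j"
      have "(Qn f (Suc j), Qn f (2*k)) \<in> (flow (Snet f k))\<^sup>*" using S_chain[of "Suc j" "2*k - Suc j" k f] j by simp
      moreover have "(Tn f j, Qn f (Suc j)) \<in> flow (Snet f k)" using S_edges(2) j by simp
      ultimately show ?thesis using j by (meson converse_rtrancl_into_rtrancl)
    qed
  qed
  show ?thesis unfolding pWF_def using pn fw bw by (auto simp: Snet_def)
qed

definition preS :: "(nat \<Rightarrow> 'a) \<Rightarrow> nat \<Rightarrow> nat \<Rightarrow> 'a multiset" where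
  "preS f k i = {#Qn f i#} + (if k \<le> i then {#Pn f#} else {#})"
definition postS :: "(nat \<Rightarrow> 'a) \<Rightarrow> nat \<Rightarrow> nat \<Rightarrow> 'a multiset" where
  "postS f k i = {#Qn f (Suc i)#} + (if i < k then {#Pn f#} else {#})"

lemma S_fire: assumes "inj f"
  shows "fire_step (Snet f k) M M' \<longleftrightarrow> (\<exists>i<2*k. preS f k i \<subseteq># M \<and> M' = M - preS f k i + postS f k i)"
proof -
  note qs = QTP_simps[OF assms(1)]
  have a: "mset_set (preset (Snet f k) (Tn f i)) = preS f k i" if "i < 2*k" for i
    using that unfolding S_pre[OF assms that] preS_def by (auto simp: qs)
  have b: "mset_set (postset (Snet f k) (Tn f i)) = postS f k i" if "i < 2*k" for i
    using that unfolding S_post[OF assms that] postS_def by (auto simp: qs)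
  have tr: "trans (Snet f k) = Tn f ` {..<2*k}" by (simp add: Snet_def)
  show ?thesis
  proof
    assume "fire_step (Snet f k) M M'"
    then obtain i where i: "i < 2*k" "mset_set (preset (Snet f k) (Tn f i)) \<subseteq># M"
      "M' = M - mset_set (preset (Snet f k) (Tn f i)) + mset_set (postset (Snet f k) (Tn f i))"
      unfolding fire_step_def tr by blast
    then show "\<exists>i<2*k. preS f k i \<subseteq># M \<and> M' = M - preS f k i + postS f k i"
      using a[OF i(1)] b[OF i(1)] by auto
  next
    assume "\<exists>i<2*k. preS f k i \<subseteq># M \<and> M' = M - preS f k i + postS f k i"
    then obtain i where i: "i < 2*k" "preS f k i \<subseteq># M" "M' = M - preS f k i + postS f k i" by blast
    have "Tn f i \<in> trans (Snet f k)" using i(1) tr by simp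
    then show "fire_step (Snet f k) M M'" unfolding fire_step_def
      using a[OF i(1)] b[OF i(1)] i(2,3) by metis
  qed
qed

definition wt :: "nat \<Rightarrow> nat \<Rightarrow> int" where
  "wt k i = (if i \<le> k then int i else 2 * int k - int i)"

definition Inv :: "(nat \<Rightarrow> 'a) \<Rightarrow> nat \<Rightarrow> 'a multiset \<Rightarrow> bool" where
  "Inv f k M \<longleftrightarrow> set_mset M \<subseteq> places (Snet f k) \<and>
     int (count M (Pn f)) = (\<Sum>l\<le>2*k. int (count M (Qn f l)) * wt k l)"

definition Ctl :: "(nat \<Rightarrow> 'a) \<Rightarrow> nat \<Rightarrow> 'a multiset \<Rightarrow> nat" where
  "Ctl f k M = (\<Sum>l\<le>2*k. count M (Qn f l))"

definition Dm :: "(nat \<Rightarrow> 'a) \<Rightarrow> nat \<Rightarrow> 'a multiset \<Rightarrow> nat" where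
  "Dm f k M = (\<Sum>l\<le>2*k. count M (Qn f l) * (2*k - l))"

lemma step_counts:
  assumes "inj f" "preS f k i \<subseteq># M" "M' = M - preS f k i + postS f k i"
  shows "int (count M' (Qn f l)) = int (count M (Qn f l)) - (if l = i then 1 else 0) + (if l = Suc i then 1 else 0)"
    "int (count M' (Pn f)) = int (count M (Pn f)) - (if k \<le> i then 1 else 0) + (if i < k then 1 else 0)"
proof -
  note qs = QTP_simps[OF assms(1)]
  have le: "count (preS f k i) x \<le> count M x" for x using assms(2) by (simp add: subseteq_mset_def)
  show "int (count M' (Qn f l)) = int (count M (Qn f l)) - (if l = i then 1 else 0) + (if l = Suc i then 1 else 0)"
    using le[of "Qn f l"] unfolding assms(3) preS_def postS_def by (auto simp: qs)
  show "int (count M' (Pn f)) = int (count M (Pn f)) - (if k \<le> i then 1 else 0) + (if i < k then 1 else 0)"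
    using le[of "Pn f"] unfolding assms(3) preS_def postS_def by (auto simp: qs)
qed

lemma step_sum:
  assumes "inj f" "preS f k i \<subseteq># M" "M' = M - preS f k i + postS f k i" "i < 2*k"
  shows "(\<Sum>l\<le>2*k. int (count M' (Qn f l)) * g l) = (\<Sum>l\<le>2*k. int (count M (Qn f l)) * g l) - g i + g (Suc i)"
proof -
  have "(\<Sum>l\<le>2*k. int (count M' (Qn f l)) * g l) =
        (\<Sum>l\<le>2*k. int (count M (Qn f l)) * g l - (if l = i then g l else 0) + (if l = Suc i then g l else 0))"
    by (rule sum.cong) (auto simp: step_counts[OF assms(1-3)] algebra_simps)
  also have "\<dots> = (\<Sum>l\<le>2*k. int (count M (Qn f l)) * g l) - (\<Sum>l\<le>2*k. (if l = i then g l else 0)) + (\<Sum>l\<le>2*k. (if l = Suc i then g l else 0))"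
    by (simp add: sum.distrib sum_subtractf)
  also have "\<dots> = (\<Sum>l\<le>2*k. int (count M (Qn f l)) * g l) - g i + g (Suc i)"
    using assms(4) by (simp add: sum.delta)
  finally show ?thesis .
qed

lemma step_inv:
  assumes "inj f" "Inv f k M" "fire_step (Snet f k) M M'"
  shows "Inv f k M' \<and> Ctl f k M' = Ctl f k M \<and> int (Dm f k M') = int (Dm f k M) - 1"
proof -
  obtain i where i: "i < 2*k" "preS f k i \<subseteq># M" "M' = M - preS f k i + postS f k i"
    using assms(3) S_fire[OF assms(1)] by blast
  note ss = step_sum[OF assms(1) i(2,3,1)]
  have pl: "set_mset M' \<subseteq> places (Snet f k)"
  proof -
    have "set_mset M' \<subseteq> set_mset M \<union> set_mset (postS f k i)" using i(3) by (auto dest: in_diffD)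
    also have "\<dots> \<subseteq> places (Snet f k)" using assms(2) i(1) unfolding Inv_def postS_def Snet_def by auto
    finally show ?thesis .
  qed
  have w: "wt k (Suc i) - wt k i = (if i < k then 1 else -1)" using i(1) unfolding wt_def by auto
  have "int (count M' (Pn f)) = (\<Sum>l\<le>2*k. int (count M' (Qn f l)) * wt k l)"
    using ss[of "wt k"] step_counts(2)[OF assms(1) i(2,3)] assms(2) w unfolding Inv_def by auto
  then have I: "Inv f k M'" using pl unfolding Inv_def by auto
  have "int (Ctl f k M') = int (Ctl f k M)"
    using ss[of "\<lambda>_. 1"] unfolding Ctl_def by simp
  moreover have "int (Dm f k M') = int (Dm f k M) - 1"
    using ss[of "\<lambda>l. int (2*k - l)"] i(1) unfolding Dm_def by (simp add: of_nat_diff)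
  ultimately show ?thesis using I by simp
qed

lemma init_inv: assumes "inj f"
  shows "Inv f k (replicate_mset k0 (Qn f 0)) \<and> Ctl f k (replicate_mset k0 (Qn f 0)) = k0"
proof -
  note qs = QTP_simps[OF assms(1)]
  have c: "count (replicate_mset k0 (Qn f 0)) (Qn f l) = (if l = 0 then k0 else 0)" for l
    by (auto simp: qs)
  have "(\<Sum>l\<le>2*k. int (count (replicate_mset k0 (Qn f 0)) (Qn f l)) * wt k l) = 0"
    unfolding c by (intro sum.neutral) (auto simp: wt_def)
  moreover have "Ctl f k (replicate_mset k0 (Qn f 0)) = k0" unfolding Ctl_def c by (simp add: sum.delta)
  moreover have "set_mset (replicate_mset k0 (Qn f 0)) \<subseteq> places (Snet f k)" by (auto simp: Snet_def)
  ultimately show ?thesis unfolding Inv_def by (simp add: qs)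
qed

lemma reach_inv: assumes "inj f" "reach (Snet f k) (replicate_mset k0 (Qn f 0)) M"
  shows "Inv f k M \<and> Ctl f k M = k0"
  using assms(2) unfolding reach_def
proof (induction rule: rtranclp_induct)
  case base then show ?case using init_inv[OF assms(1)] by blast
next
  case (step y z) then show ?case using step_inv[OF assms(1)] by metis
qed

lemma completion:
  assumes "inj f" "1 \<le> k" "Inv f k M"
  shows "reach (Snet f k) M (replicate_mset (Ctl f k M) (Qn f (2*k)))"
  using assms(3)
proof (induction "Dm f k M" arbitrary: M rule: less_induct)
  case less
  note qs = QTP_simps[OF assms(1)]
  show ?case
  proof (cases "\<exists>i<2*k. 0 < count M (Qn f i)")
    case True
    have "\<exists>i<2*k. preS f k i \<subseteq># M"
    proof (cases "\<exists>i<k. 0 < count M (Qn f i)")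
      case True
      then obtain i where i: "i < k" "0 < count M (Qn f i)" by blast
      then have "preS f k i \<subseteq># M" unfolding preS_def by simp
      then show ?thesis using i by (intro exI[of _ i]) auto
    next
      case False
      then obtain i where i: "k \<le> i" "i < 2*k" "0 < count M (Qn f i)" using True by (meson not_le)
      have "int (count M (Qn f i)) * wt k i \<le> (\<Sum>l\<le>2*k. int (count M (Qn f l)) * wt k l)"
        by (rule member_le_sum) (use i in \<open>auto simp: wt_def\<close>)
      moreover have "1 \<le> wt k i" using i assms(2) unfolding wt_def by auto
      ultimately have "1 \<le> int (count M (Pn f))" using less.prems i(3) unfolding Inv_def
        by (smt (verit) mult_le_cancel_left1 of_nat_0_less_iff)
      then have "preS f k i \<subseteq># M" using i unfolding preS_def
        by (auto simp: subseteq_mset_def qs)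
      then show ?thesis using i by (intro exI[of _ i]) auto
    qed
    then obtain i where i: "i < 2*k" "preS f k i \<subseteq># M" by blast
    define M' where "M' = M - preS f k i + postS f k i"
    have fs: "fire_step (Snet f k) M M'" using S_fire[OF assms(1)] i M'_def by blast
    note st = step_inv[OF assms(1) less.prems fs]
    have "Dm f k M' < Dm f k M" using st by simp
    then have "reach (Snet f k) M' (replicate_mset (Ctl f k M') (Qn f (2*k)))" using less st by blast
    then show ?thesis using st fs reach_step reach_trans by metis
  next
    case False
    then have z: "count M (Qn f l) = 0" if "l < 2*k" for l using that by (auto simp: count_eq_zero_iff)
    have c2: "Ctl f k M = count M (Qn f (2*k))"
    proof -
      have "Ctl f k M = (\<Sum>l\<in>{2*k}. count M (Qn f l))" unfolding Ctl_def
        by (rule sum.mono_neutral_right) (auto simp: z)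
      then show ?thesis by simp
    qed
    have p0: "count M (Pn f) = 0"
    proof -
      have "(\<Sum>l\<le>2*k. int (count M (Qn f l)) * wt k l) = (\<Sum>l\<in>{2*k}. int (count M (Qn f l)) * wt k l)"
        by (rule sum.mono_neutral_right) (auto simp: z)
      also have "\<dots> = 0" by (simp add: wt_def)
      finally show ?thesis using less.prems unfolding Inv_def by simp
    qed
    have "M = replicate_mset (Ctl f k M) (Qn f (2*k))"
    proof (rule multiset_eqI)
      fix x
      show "count M x = count (replicate_mset (Ctl f k M) (Qn f (2*k))) x"
      proof (cases "x \<in> places (Snet f k)")
        case True
        then have "x = Pn f \<or> (\<exists>l\<le>2*k. x = Qn f l)" by (auto simp: Snet_def)
        then show ?thesis
        proof (elim disjE exE conjE)
          assume "x = Pn f" then show ?thesis using p0 by (simp add: qs)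
        next
          fix l assume l: "l \<le> 2*k" "x = Qn f l"
          show ?thesis
          proof (cases "l = 2*k")
            case True then show ?thesis using l c2 by simp
          next
            case False then show ?thesis using l z[of l] by (simp add: qs)
          qed
        qed
      next
        case False
        then have "x \<notin># M" using less.prems unfolding Inv_def by auto
        moreover have "x \<noteq> Qn f (2*k)" using False by (auto simp: Snet_def)
        ultimately show ?thesis by (simp add: count_eq_zero_iff)
      qed
    qed
    then show ?thesis by (metis reach_refl)
  qed
qed

lemma S_subsound: assumes "inj f" "1 \<le> k" shows "sub_sound (Snet f k)"
  unfolding sub_sound_def
proof (intro allI impI)
  fix k0 k' m'
  assume kk: "k' \<le> k0" and r: "reach (Snet f k) (repeat_mset k0 (mset_set (inp (Snet f k))))
           (m' + repeat_mset k' (mset_set (outp (Snet f k))))"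
  note qs = QTP_simps[OF assms(1)]
  have r': "reach (Snet f k) (replicate_mset k0 (Qn f 0)) (m' + replicate_mset k' (Qn f (2*k)))"
    using r by (simp add: Snet_def repeat_mset_replicate_mset)
  note iv = reach_inv[OF assms(1) r']
  let ?R = "replicate_mset k' (Qn f (2*k))"
  have cq: "count (m' + ?R) (Qn f l) = count m' (Qn f l) + (if l = 2*k then k' else 0)" for l
    by (auto simp: qs)
  have "Inv f k m'"
  proof -
    have "set_mset m' \<subseteq> places (Snet f k)" using iv unfolding Inv_def by auto
    moreover have "(\<Sum>l\<le>2*k. int (count (m' + ?R) (Qn f l)) * wt k l) = (\<Sum>l\<le>2*k. int (count m' (Qn f l)) * wt k l)"
      by (rule sum.cong) (auto simp: cq wt_def qs)
    moreover have "count (m' + ?R) (Pn f) = count m' (Pn f)" by (simp add: qs)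
    ultimately show ?thesis using iv unfolding Inv_def by simp
  qed
  moreover have "Ctl f k m' = k0 - k'"
  proof -
    have "Ctl f k (m' + ?R) = Ctl f k m' + (\<Sum>l\<le>2*k. if l = 2*k then k' else 0)"
      unfolding Ctl_def cq by (simp add: sum.distrib)
    then show ?thesis using iv by simp
  qed
  ultimately have "reach (Snet f k) m' (replicate_mset (k0 - k') (Qn f (2*k)))"
    using completion[OF assms] by metis
  then show "reach (Snet f k) m' (repeat_mset (k0 - k') (mset_set (outp (Snet f k))))"
    by (simp add: Snet_def repeat_mset_replicate_mset)
qed

lemma in_repeat_mset_D': "x \<in># repeat_mset n A \<Longrightarrow> x \<in># A"
  using count_repeat_mset[of n A x] by (metis count_eq_zero_iff mult_zero_right)

lemma reach_induct[consumes 1, case_names base step]: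
  "reach N a b \<Longrightarrow> P a \<Longrightarrow> (\<And>y z. reach N a y \<Longrightarrow> fire_step N y z \<Longrightarrow> P y \<Longrightarrow> P z) \<Longrightarrow> P b"
  unfolding reach_def by (induction rule: rtranclp_induct) auto

lemma mdiff_helper: assumes "X \<subseteq># A" shows "A + B - X + Y = (A - X + Y) + B"
proof (rule multiset_eqI)
  fix x have "count X x \<le> count A x" using assms by (simp add: subseteq_mset_def)
  then show "count (A + B - X + Y) x = count (A - X + Y + B) x" by simp
qed

definition preC :: "(nat \<Rightarrow> 'a) \<Rightarrow> nat \<Rightarrow> 'a pnet \<Rightarrow> nat \<Rightarrow> 'a multiset" where
  "preC f k N i = {#Qn f i#} + (if k \<le> i then mset_set (outp N) else {#})"
definition postC :: "(nat \<Rightarrow> 'a) \<Rightarrow> nat \<Rightarrow> 'a pnet \<Rightarrow> nat \<Rightarrow> 'a multiset" where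
  "postC f k N i = {#Qn f (Suc i)#} + (if i < k then mset_set (inp N) else {#})"

context
  fixes f :: "nat \<Rightarrow> 'a" and k :: nat and N :: "'a pnet"
  assumes inj: "inj f" and k1: "1 \<le> k" and pN: "pWF N" and disj: "range f \<inter> nodes N = {}"
begin

lemma pnN: "petri_net N" using pN unfolding pWF_def by auto
lemma inpN: "inp N \<subseteq> places N" "outp N \<subseteq> places N" using pN unfolding pWF_def by auto
lemma finN: "finite (inp N)" "finite (outp N)" using inpN pnN unfolding petri_net_def by (auto intro: finite_subset)

lemma f_notN: "f x \<notin> nodes N" using disj by auto
lemma f_notPN: "f x \<notin> places N" using f_notN unfolding nodes_def by auto
lemma Q_notPN: "Qn f i \<notin> places N" unfolding Qn_def by (rule f_notPN)

lemma SN_disj: "nodes (Snet f k) \<inter> nodes N = {}"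
  using f_notN unfolding nodes_def Snet_def Qn_def Tn_def Pn_def by auto

lemma P_in: "Pn f \<in> places (Snet f k)" by (simp add: Snet_def)

lemma pnS: "petri_net (Snet f k)" using S_pWF[OF inj k1] unfolding pWF_def by auto

lemma C_inp: "inp (subst_place (Snet f k) (Pn f) N) = {Qn f 0}"
  using QTP_simps[OF inj] unfolding subst_place_def Snet_def by auto
lemma C_outp: "outp (subst_place (Snet f k) (Pn f) N) = {Qn f (2*k)}"
  using QTP_simps[OF inj] unfolding subst_place_def Snet_def by auto
lemma C_trans: "trans (subst_place (Snet f k) (Pn f) N) = Tn f ` {..<2*k} \<union> trans N"
  unfolding subst_place_def Snet_def by auto

lemma C_pre_T: assumes "i < 2*k"
  shows "mset_set (preset (subst_place (Snet f k) (Pn f) N) (Tn f i)) = preC f k N i"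
proof -
  have t: "Tn f i \<in> trans (Snet f k)" using assms by (simp add: Snet_def)
  have "preset (subst_place (Snet f k) (Pn f) N) (Tn f i) = insert (Qn f i) (if k \<le> i then outp N else {})"
    unfolding subst_pre_outer[OF pnS pN SN_disj t P_in] S_pre[OF inj assms] using QTP_simps[OF inj] by auto
  moreover have "Qn f i \<notin> outp N" using Q_notPN inpN by blast
  ultimately show ?thesis unfolding preC_def using finN by (auto simp: mset_set.insert)
qed

lemma C_post_T: assumes "i < 2*k"
  shows "mset_set (postset (subst_place (Snet f k) (Pn f) N) (Tn f i)) = postC f k N i"
proof -
  have t: "Tn f i \<in> trans (Snet f k)" using assms by (simp add: Snet_def)
  have "postset (subst_place (Snet f k) (Pn f) N) (Tn f i) = insert (Qn f (Suc i)) (if i < k then inp N else {})"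
    unfolding subst_post_outer[OF pnS pN SN_disj t P_in] S_post[OF inj assms] using QTP_simps[OF inj] by auto
  moreover have "Qn f (Suc i) \<notin> inp N" using Q_notPN inpN by blast
  ultimately show ?thesis unfolding postC_def using finN by (auto simp: mset_set.insert)
qed

lemma C_fire_T: "i < 2*k \<Longrightarrow> preC f k N i \<subseteq># M \<Longrightarrow>
   fire_step (subst_place (Snet f k) (Pn f) N) M (M - preC f k N i + postC f k N i)"
  unfolding fire_step_def C_trans using C_pre_T C_post_T by (metis UnI1 image_eqI lessThan_iff)

lemma C_fire_cases:
  assumes "fire_step (subst_place (Snet f k) (Pn f) N) M M'"
  shows "(\<exists>t\<in>trans N. mset_set (preset N t) \<subseteq># M \<and> M' = M - mset_set (preset N t) + mset_set (postset N t))
     \<or> (\<exists>i<2*k. preC f k N i \<subseteq># M \<and> M' = M - preC f k N i + postC f k N i)"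
proof -
  obtain t where t: "t \<in> trans (subst_place (Snet f k) (Pn f) N)"
    "mset_set (preset (subst_place (Snet f k) (Pn f) N) t) \<subseteq># M"
    "M' = M - mset_set (preset (subst_place (Snet f k) (Pn f) N) t) + mset_set (postset (subst_place (Snet f k) (Pn f) N) t)"
    using assms unfolding fire_step_def by blast
  show ?thesis
  proof (cases "t \<in> trans N")
    case True
    then show ?thesis using t subst_pre_inner[OF pnS pN SN_disj True] subst_post_inner[OF pnS pN SN_disj True]
      by auto
  next
    case False
    then obtain i where i: "i < 2*k" "t = Tn f i" using t(1) C_trans by auto
    then show ?thesis using t C_pre_T C_post_T by auto
  qed
qed

lemma C_sub: "t \<in> trans N \<Longrightarrow> t \<in> trans (subst_place (Snet f k) (Pn f) N) \<and>
   preset (subst_place (Snet f k) (Pn f) N) t = preset N t \<and> postset (subst_place (Snet f k) (Pn f) N) t = postset N t"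
  using subst_pre_inner[OF pnS pN SN_disj] subst_post_inner[OF pnS pN SN_disj] C_trans by auto

end


context
  fixes f :: "nat \<Rightarrow> 'a" and k :: nat and N :: "'a pnet"
  assumes inj: "inj f" and k1: "1 \<le> k" and pN: "pWF N" and disj: "range f \<inter> nodes N = {}"
begin

abbreviation "Cm \<equiv> subst_place (Snet f k) (Pn f) N"

lemma C_gen: "j \<le> k \<Longrightarrow> reach Cm {#Qn f 0#} ({#Qn f j#} + repeat_mset j (mset_set (inp N)))"
proof (induction j)
  case 0 then show ?case by simp
next
  case (Suc j)
  then have j: "j < k" "j < 2*k" by auto
  let ?M = "{#Qn f j#} + repeat_mset j (mset_set (inp N))"
  have pre: "preC f k N j = {#Qn f j#}" using j unfolding preC_def by simp
  have fs: "fire_step Cm ?M (?M - preC f k N j + postC f k N j)"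
    by (rule C_fire_T[OF inj k1 pN disj j(2)]) (simp add: pre)
  have eq: "?M - preC f k N j + postC f k N j = {#Qn f (Suc j)#} + repeat_mset (Suc j) (mset_set (inp N))"
    using j unfolding pre postC_def by (simp add: ac_simps)
  have IH: "reach Cm {#Qn f 0#} ?M" using Suc.IH Suc.prems by simp
  show ?case using reach_step_trans[OF IH fs] unfolding eq .
qed

lemma C_cons: "j \<le> k' \<Longrightarrow> k' \<le> k \<Longrightarrow>
  reach Cm (m' + repeat_mset k' (mset_set (outp N)) + {#Qn f k#})
           (m' + repeat_mset (k'-j) (mset_set (outp N)) + {#Qn f (k+j)#})"
proof (induction j)
  case 0 then show ?case by simp
next
  case (Suc j)
  then have j: "j < k'" "k + j < 2*k" by auto
  let ?O = "mset_set (outp N)"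
  let ?R = "m' + repeat_mset (k' - Suc j) ?O"
  have pre: "preC f k N (k+j) = {#Qn f (k+j)#} + ?O" unfolding preC_def by simp
  have post: "postC f k N (k+j) = {#Qn f (Suc (k+j))#}" unfolding postC_def by simp
  have "k' - j = Suc (k' - Suc j)" using j by simp
  then have M: "m' + repeat_mset (k'-j) ?O + {#Qn f (k+j)#} = ?R + preC f k N (k+j)"
    unfolding pre by (simp add: ac_simps)
  have fs: "fire_step Cm (?R + preC f k N (k+j)) (?R + preC f k N (k+j) - preC f k N (k+j) + postC f k N (k+j))"
    by (rule C_fire_T[OF inj k1 pN disj j(2)]) simp
  have eq: "?R + preC f k N (k+j) - preC f k N (k+j) + postC f k N (k+j) = m' + repeat_mset (k' - Suc j) ?O + {#Qn f (k + Suc j)#}"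
    unfolding post by simp
  have IH: "reach Cm (m' + repeat_mset k' ?O + {#Qn f k#}) (?R + preC f k N (k+j))"
    using Suc.IH Suc.prems unfolding M[symmetric] by simp
  show ?case using reach_step_trans[OF IH fs] unfolding eq .
qed

lemma C_reach:
  assumes "k' \<le> k" "reach N (repeat_mset k (mset_set (inp N))) (m' + repeat_mset k' (mset_set (outp N)))"
  shows "reach Cm {#Qn f 0#} (m' + {#Qn f (k+k')#})"
proof -
  have a: "reach Cm {#Qn f 0#} ({#Qn f k#} + repeat_mset k (mset_set (inp N)))" using C_gen by simp
  have "reach Cm (repeat_mset k (mset_set (inp N))) (m' + repeat_mset k' (mset_set (outp N)))"
    by (rule reach_sub[OF _ assms(2)]) (rule C_sub[OF inj k1 pN disj])
  from reach_mono[OF this, of "{#Qn f k#}"]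
  have b: "reach Cm ({#Qn f k#} + repeat_mset k (mset_set (inp N))) (m' + repeat_mset k' (mset_set (outp N)) + {#Qn f k#})"
    by (simp add: ac_simps)
  have c: "reach Cm (m' + repeat_mset k' (mset_set (outp N)) + {#Qn f k#}) (m' + {#Qn f (k+k')#})"
    using C_cons[of k' k' m'] assms(1) by simp
  show ?thesis using reach_trans[OF reach_trans[OF a b] c] .
qed

lemma C_inv:
  assumes "set_mset m' \<subseteq> places N" "k + k' \<le> 2*k"
    "reach Cm (m' + {#Qn f (k+k')#}) M"
  shows "\<exists>j A. k + k' \<le> j \<and> j \<le> 2*k \<and> M = A + {#Qn f j#} \<and> set_mset A \<subseteq> places N \<and>
     reach N m' (A + repeat_mset (j - (k+k')) (mset_set (outp N)))"
  using assms(3)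
proof (induction rule: reach_induct)
  case base
  show ?case using assms(1,2) by (intro exI[of _ "k+k'"] exI[of _ m']) auto
next
  case (step y z)
  from step(3) obtain j A where jA: "k + k' \<le> j" "j \<le> 2*k" "y = A + {#Qn f j#}" "set_mset A \<subseteq> places N"
    "reach N m' (A + repeat_mset (j - (k+k')) (mset_set (outp N)))" by blast
  let ?O = "mset_set (outp N)"
  have QA: "Qn f i \<notin># A" for i using jA(4) Q_notPN[OF inj k1 pN disj] by blast
  from C_fire_cases[OF inj k1 pN disj step(2)] show ?case
  proof (elim disjE bexE exE conjE)
    fix t assume t: "t \<in> trans N" "mset_set (preset N t) \<subseteq># y"
      "z = y - mset_set (preset N t) + mset_set (postset N t)"
    have "Qn f j \<notin> preset N t" using preset_places[OF pnN[OF inj k1 pN disj] t(1)] Q_notPN[OF inj k1 pN disj] by blast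
    then have "count (mset_set (preset N t)) (Qn f j) = 0"
      by (rule count_mset_set(3))
    then have sub: "mset_set (preset N t) \<subseteq># A" unfolding subseteq_mset_def
    proof (intro allI)
      fix x
      assume c0: "count (mset_set (preset N t)) (Qn f j) = 0"
      have "count (mset_set (preset N t)) x \<le> count (A + {#Qn f j#}) x"
        using t(2) unfolding jA(3) subseteq_mset_def by blast
      then show "count (mset_set (preset N t)) x \<le> count A x" using c0 by (cases "x = Qn f j") auto
    qed
    define A' where "A' = A - mset_set (preset N t) + mset_set (postset N t)"
    have fsN: "fire_step N A A'" using t(1) sub A'_def unfolding fire_step_def by blast
    have z: "z = A' + {#Qn f j#}" unfolding t(3) jA(3) A'_def by (rule mdiff_helper[OF sub])
    have "set_mset A' \<subseteq> places N" using fire_places[OF pnN[OF inj k1 pN disj] jA(4) fsN] .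
    moreover have "reach N m' (A' + repeat_mset (j - (k+k')) ?O)"
      using reach_step_trans[OF jA(5) fire_step_mono[OF fsN]] .
    ultimately show ?case using jA(1,2) z by blast
  next
    fix i assume i: "i < 2*k" "preC f k N i \<subseteq># y" "z = y - preC f k N i + postC f k N i"
    have "Qn f i \<in># preC f k N i" by (simp add: preC_def)
    then have "Qn f i \<in># y" using mset_subset_eqD[OF i(2)] by blast
    then have ij: "i = j" using QA[of i] QTP_simps[OF inj] unfolding jA(3) by auto
    then have pre: "preC f k N i = {#Qn f j#} + ?O" using jA(1) unfolding preC_def by simp
    have post: "postC f k N i = {#Qn f (Suc j)#}" using jA(1) ij unfolding postC_def by simp
    have sub: "?O \<subseteq># A" using i(2) unfolding pre jA(3) by (simp add: ac_simps)
    define A' where "A' = A - ?O"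
    have z: "z = A' + {#Qn f (Suc j)#}" unfolding i(3) pre post jA(3) A'_def by (simp add: ac_simps)
    have "set_mset A' \<subseteq> places N" using jA(4) unfolding A'_def by (auto dest: in_diffD)
    moreover have "A' + repeat_mset (Suc j - (k+k')) ?O = A + repeat_mset (j - (k+k')) ?O"
    proof -
      have "Suc j - (k+k') = Suc (j - (k+k'))" using jA(1) by simp
      then have "A' + repeat_mset (Suc j - (k+k')) ?O = (A - ?O + ?O) + repeat_mset (j - (k+k')) ?O"
        unfolding A'_def by (simp only: repeat_mset_Suc union_assoc)
      also have "\<dots> = A + repeat_mset (j - (k+k')) ?O" by (simp only: subset_mset.diff_add[OF sub])
      finally show ?thesis .
    qed
    ultimately show ?case using jA(1,5) i(1) ij z by (intro exI[of _ "Suc j"] exI[of _ A']) auto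
  qed
qed

lemma C_not_sound:
  assumes "k' \<le> k" "reach N (repeat_mset k (mset_set (inp N))) (m' + repeat_mset k' (mset_set (outp N)))"
    "\<not> reach N m' (repeat_mset (k - k') (mset_set (outp N)))"
  shows "\<not> k_sound 1 Cm"
proof
  assume ks: "k_sound 1 Cm"
  have r1: "reach Cm {#Qn f 0#} (m' + {#Qn f (k+k')#})" using C_reach[OF assms(1,2)] .
  have r2: "reach Cm (m' + {#Qn f (k+k')#}) {#Qn f (2*k)#}"
    using ks r1 unfolding k_sound_def C_inp[OF inj k1 pN disj] C_outp[OF inj k1 pN disj] by simp
  have ms: "set_mset m' \<subseteq> places N"
  proof -
    have "set_mset (repeat_mset k (mset_set (inp N))) \<subseteq> places N"
    proof
      fix x assume "x \<in># repeat_mset k (mset_set (inp N))"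
      then have "x \<in># mset_set (inp N)" by (rule in_repeat_mset_D')
      then show "x \<in> places N" using inpN[OF inj k1 pN disj] finN[OF inj k1 pN disj] by auto
    qed
    then have "set_mset (m' + repeat_mset k' (mset_set (outp N))) \<subseteq> places N"
      using reach_places[OF pnN[OF inj k1 pN disj] assms(2)] by blast
    then show ?thesis by auto
  qed
  obtain j A where jA: "k + k' \<le> j" "j \<le> 2*k" "{#Qn f (2*k)#} = A + {#Qn f j#}"
    "reach N m' (A + repeat_mset (j - (k+k')) (mset_set (outp N)))"
  proof -
    have "k + k' \<le> 2*k" using assms(1) by simp
    then show ?thesis using C_inv[OF ms _ r2] that by blast
  qed
  then have "A = {#}" "j = 2*k" using QTP_simps[OF inj] by (auto simp: add_mset_eq_single)
  then show False using jA(4) assms(3) by (simp add: mult_2)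
qed

end


lemma preset_nonempty: assumes "pWF N" "t \<in> trans N" shows "preset N t \<noteq> {}"
proof -
  have tn: "t \<in> nodes N" using assms(2) by (simp add: nodes_def)
  obtain i where i: "i \<in> inp N" "(i, t) \<in> (flow N)\<^sup>*" using assms(1) tn unfolding pWF_def by blast
  have "i \<in> places N" using i(1) assms(1) unfolding pWF_def by auto
  then have "i \<noteq> t" using assms unfolding pWF_def petri_net_def by auto
  from i(2) show ?thesis
  proof (cases rule: rtranclE)
    case base then show ?thesis using \<open>i \<noteq> t\<close> by simp
  next
    case (step y) then show ?thesis unfolding preset_def by auto
  qed
qed

lemma no_fire_empty: assumes "pWF N" shows "\<not> fire_step N {#} z"
proof
  assume "fire_step N {#} z"
  then obtain t where t: "t \<in> trans N" "mset_set (preset N t) \<subseteq># {#}"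
    unfolding fire_step_def by blast
  have pn: "petri_net N" using assms unfolding pWF_def by blast
  have fin: "finite (preset N t)" by (rule fin_preset[OF pn t(1)])
  have "mset_set (preset N t) = {#}" using t(2) by (rule subset_mset.antisym) simp
  then have "preset N t = {}" using fin by (simp only: mset_set_empty_iff) blast
  then show False using preset_nonempty[OF assms t(1)] by blast
qed

lemma reach_empty: assumes "pWF N" "reach N {#} m" shows "m = {#}"
  using assms(2) unfolding reach_def
proof (cases rule: converse_rtranclpE)
  case base then show ?thesis by simp
next
  case (step z) then show ?thesis using no_fire_empty[OF assms(1)] by blast
qed

theorem mainTheorem5:
  assumes "infinite (UNIV :: 'a set)"
  shows "\<not> (\<exists>C :: 'a pnet set.
            (\<forall>N \<in> C. pWF N) \<and>
            (\<forall>N. pWF N \<and> sub_sound N \<longrightarrow> N \<in> C) \<and>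
            (\<exists>N \<in> C. \<not> sub_sound N) \<and>
            (\<forall>N \<in> C. k_sound 1 N) \<and>
            (\<forall>N \<in> C. \<forall>M \<in> C. \<forall>p. nodes N \<inter> nodes M = {} \<and> p \<in> places N
                \<longrightarrow> subst_place N p M \<in> C))"
proof
  assume "\<exists>C :: 'a pnet set.
            (\<forall>N \<in> C. pWF N) \<and>
            (\<forall>N. pWF N \<and> sub_sound N \<longrightarrow> N \<in> C) \<and>
            (\<exists>N \<in> C. \<not> sub_sound N) \<and>
            (\<forall>N \<in> C. k_sound 1 N) \<and>
            (\<forall>N \<in> C. \<forall>M \<in> C. \<forall>p. nodes N \<inter> nodes M = {} \<and> p \<in> places N
                \<longrightarrow> subst_place N p M \<in> C)"
  then obtain C :: "'a pnet set" where C1: "\<forall>N \<in> C. pWF N" and C2: "\<forall>N. pWF N \<and> sub_sound N \<longrightarrow> N \<in> C"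
    and C3: "\<exists>N \<in> C. \<not> sub_sound N" and C4: "\<forall>N \<in> C. k_sound 1 N"
    and C5: "\<forall>N \<in> C. \<forall>M \<in> C. \<forall>p. nodes N \<inter> nodes M = {} \<and> p \<in> places N \<longrightarrow> subst_place N p M \<in> C"
    by blast
  obtain N where N: "N \<in> C" "\<not> sub_sound N" using C3 by blast
  have pN: "pWF N" using C1 N(1) by blast
  obtain k k' m' where kk: "k' \<le> k"
    and r: "reach N (repeat_mset k (mset_set (inp N))) (m' + repeat_mset k' (mset_set (outp N)))"
    and nr: "\<not> reach N m' (repeat_mset (k - k') (mset_set (outp N)))"
    using N(2) unfolding sub_sound_def by blast
  have k1: "1 \<le> k"
  proof (rule ccontr)
    assume "\<not> 1 \<le> k"
    then have "k = 0" "k' = 0" using kk by auto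
    then have "reach N {#} m'" using r by simp
    then have "m' = {#}" using reach_empty[OF pN] by blast
    then show False using nr \<open>k = 0\<close> by simp
  qed
  have "finite (nodes N)" using pN unfolding pWF_def petri_net_def nodes_def by auto
  then have "infinite (UNIV - nodes N)" using assms by (simp add: Diff_infinite_finite)
  then obtain f :: "nat \<Rightarrow> 'a" where f: "inj f" "range f \<subseteq> UNIV - nodes N"
    using infinite_countable_subset by blast
  have disj: "range f \<inter> nodes N = {}" using f(2) by blast
  have SC: "Snet f k \<in> C" using C2[rule_format, OF conjI[OF S_pWF[OF f(1) k1] S_subsound[OF f(1) k1]]] .
  have "subst_place (Snet f k) (Pn f) N \<in> C"
    by (rule C5[rule_format, OF SC N(1)]) (use SN_disj[OF f(1) k1 pN disj] P_in[OF f(1) k1 pN disj] in simp)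
  then have "k_sound 1 (subst_place (Snet f k) (Pn f) N)" using C4 by blast
  then show False using C_not_sound[OF f(1) k1 pN disj kk r nr] by blast
qed

end
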